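(* Let $\pi^0,\pi^1,\gamma>0$, $\mathrm{E}^{\mathrm{bau}}=\bm{q^{\mathrm{bau}}}=\pi^0/\pi^1$, $\mathcal{W}^{\mathrm{bau}}_{\mathrm{C}}=(\pi^0)^2/(2\pi^1)$, $\varrho=1/\pi^1+1/\gamma$, and let $\tau,\lambda>0$ satisfy $\tau\varrho<\mathrm{E}^{\mathrm{bau}}$ and $\lambda\varrho<\mathrm{E}^{\mathrm{bau}}$. Let $0<P<\lambda$. (Tax) The wealth $\pi(q)-c(q,a)-\tau e^{-a}q$ is maximized at $\bm{q^{\mathrm{tax}}}=\bm{q^{\mathrm{bau}}}-\tau/\pi^1$ and $e^{-\bm{a^{\mathrm{tax}}}}=(\mathrm{E}^{\mathrm{bau}}-\tau\varrho)/\bm{q^{\mathrm{tax}}}$, with resulting emissions $\mathrm{E}^{\mathrm{tax}}=e^{-\bm{a^{\mathrm{tax}}}}\bm{q^{\mathrm{tax}}}=\mathrm{E}^{\mathrm{bau}}-\tau\varrho$ and wealth $\mathcal{W}^{\mathrm{tax}}_{\mathrm{C}}=\mathcal{W}^{\mathrm{bau}}_{\mathrm{C}}-\tau(\mathrm{E}^{\mathrm{bau}}-\tfrac\tau2\varrho)$. (Market) The wealth $\pi(q)-c(q,a)-\delta P-\lambda(qe^{-a}-\delta)^+$ is maximized at $\bm{q^{\mathrm{mar}}}=\bm{q^{\mathrm{bau}}}-P/\pi^1$, $e^{-\bm{a^{\mathrm{mar}}}}=(\mathrm{E}^{\mathrm{bau}}-P\varrho)/\bm{q^{\mathrm{mar}}}$,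 $\bm\delta=\mathrm{E}^{\mathrm{bau}}-P\varrho$, with resulting emissions $\mathrm{E}^{\mathrm{mar}}=\mathrm{E}^{\mathrm{bau}}-P\varrho=\bm\delta$ and wealth $\mathcal{W}^{\mathrm{mar}}_{\mathrm{C}}=\mathcal{W}^{\mathrm{bau}}_{\mathrm{C}}-P(\mathrm{E}^{\mathrm{bau}}-\tfrac P2\varrho)$.
   Context: A company producing $q$ units has raw wealth $\pi(q)=\pi^0q-\tfrac{\pi^1}{2}q^2$; its carbon emissions equal $q$, reduced to $e^{-a}q$ by a green technology effort $a$ at cost $c(q,a)=\tfrac\gamma2[(1-e^{-a})q]^2$. Under the tax scheme a tax $\tau$ is paid per unit of emission; under the market scheme the company buys $\delta$ certificates at unit price $P$ and pays a penalty $\lambda$ per unit of emission exceeding $\delta$. The company maximizes its wealth over its decision variables ($q,a$ under tax; $q,a,\delta$ under market), subject to production and wealth being positive. $\mathrm{E}^{\mathrm{bau}},\bm{q^{\mathrm{bau}}},\mathcal{W}^{\mathrm{bau}}_{\mathrm{C}}$ are the business-as-usual (unconstrained) emissions, production and wealth. *)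

theory Defs
  imports Complex_Main
begin

definition raw_wealth :: "real \<Rightarrow> real \<Rightarrow> real \<Rightarrow> real" where
  "raw_wealth pi0 pi1 q = pi0 * q - pi1 / 2 * q ^ 2"

definition green_cost :: "real \<Rightarrow> real \<Rightarrow> real \<Rightarrow> real" where
  "green_cost gamma q a = gamma / 2 * ((1 - exp (- a)) * q) ^ 2"

definition wealth_tax :: "real \<Rightarrow> real \<Rightarrow> real \<Rightarrow> real \<Rightarrow> real \<times> real \<Rightarrow> real" where
  "wealth_tax pi0 pi1 gamma tau qa =
     (case qa of (q, a) \<Rightarrow> raw_wealth pi0 pi1 q - green_cost gamma q a - tau * exp (- a) * q)"

definition feasible_tax :: "real \<Rightarrow> real \<Rightarrow> real \<Rightarrow> real \<Rightarrow> real \<times> real \<Rightarrow> bool" where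
  "feasible_tax pi0 pi1 gamma tau qa =
     (fst qa > 0 \<and> snd qa \<ge> 0 \<and> wealth_tax pi0 pi1 gamma tau qa > 0)"

definition wealth_mar :: "real \<Rightarrow> real \<Rightarrow> real \<Rightarrow> real \<Rightarrow> real \<Rightarrow> real \<times> real \<times> real \<Rightarrow> real" where
  "wealth_mar pi0 pi1 gamma P lam qad =
     (case qad of (q, a, d) \<Rightarrow>
        raw_wealth pi0 pi1 q - green_cost gamma q a - d * P - lam * max 0 (q * exp (- a) - d))"

definition feasible_mar :: "real \<Rightarrow> real \<Rightarrow> real \<Rightarrow> real \<Rightarrow> real \<Rightarrow> real \<times> real \<times> real \<Rightarrow> bool" where
  "feasible_mar pi0 pi1 gamma P lam qad =
     (case qad of (q, a, d) \<Rightarrow>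
        q > 0 \<and> a \<ge> 0 \<and> d \<ge> 0 \<and> wealth_mar pi0 pi1 gamma P lam qad > 0)"

end

theory Submission
  imports Defs
begin

lemma core_ineq:
  fixes pi0 pi1 gamma t q E :: real
  assumes "pi1 > 0" "gamma > 0"
  shows "pi0 * q - pi1 / 2 * q ^ 2 - gamma / 2 * (q - E) ^ 2 - t * E
     \<le> pi0 ^ 2 / (2 * pi1) - t * (pi0 / pi1 - t / 2 * (1 / pi1 + 1 / gamma))"
proof -
  define q0 where "q0 = (pi0 - t) / pi1"
  have id: "pi0 ^ 2 / (2 * pi1) - t * (pi0 / pi1 - t / 2 * (1 / pi1 + 1 / gamma))
     - (pi0 * q - pi1 / 2 * q ^ 2 - gamma / 2 * (q - E) ^ 2 - t * E)
     = pi1 / 2 * (q - q0) ^ 2 + gamma / 2 * (q - E - t / gamma) ^ 2"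
    using assms unfolding q0_def by (simp add: field_simps power2_eq_square)
  have "pi1 / 2 * (q - q0) ^ 2 + gamma / 2 * (q - E - t / gamma) ^ 2 \<ge> 0"
    using assms by (intro add_nonneg_nonneg mult_nonneg_nonneg) auto
  then show ?thesis using id by linarith
qed

lemma wt_eq: "wealth_tax pi0 pi1 gamma tau (q, a) =
   pi0 * q - pi1 / 2 * q ^ 2 - gamma / 2 * (q - exp (- a) * q) ^ 2 - tau * (exp (- a) * q)"
  unfolding wealth_tax_def raw_wealth_def green_cost_def by (simp add: algebra_simps)

lemma wm_eq: "wealth_mar pi0 pi1 gamma P lam (q, a, d) =
   pi0 * q - pi1 / 2 * q ^ 2 - gamma / 2 * (q - exp (- a) * q) ^ 2 - d * P
   - lam * max 0 (exp (- a) * q - d)"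
  unfolding wealth_mar_def raw_wealth_def green_cost_def by (simp add: algebra_simps)

lemma opt_value0:
  fixes pi0 pi1 gamma t q E :: real
  assumes "pi1 > 0" "gamma > 0" "q = pi0 / pi1 - t / pi1"
    and "E = pi0 / pi1 - t * (1 / pi1 + 1 / gamma)"
  shows "pi0 * q - pi1 / 2 * q ^ 2 - gamma / 2 * (q - E) ^ 2 - t * E
     = pi0 ^ 2 / (2 * pi1) - t * (pi0 / pi1 - t / 2 * (1 / pi1 + 1 / gamma))"
proof -
  have p: "pi0 = t + pi1 * q" using assms(1,3) by (simp add: field_simps)
  have h: "gamma * pi1 * E = gamma * pi0 - gamma * t - pi1 * t"
    using assms(1,2,4) by (simp add: field_simps)
  have "pi1 * (t + E * gamma) = pi1 * (gamma * q)"
    using h unfolding p by (simp add: algebra_simps)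
  then have "t + E * gamma = gamma * q" using assms(1) by simp
  then have e: "E = q - t / gamma" using assms(2) by (simp add: field_simps)
  show ?thesis unfolding p e using assms(1,2) by (simp add: field_simps power2_eq_square)
qed

lemma opt_value:
  fixes pi0 pi1 gamma t a :: real
  assumes "pi1 > 0" "gamma > 0"
    and "exp (- a) * (pi0 / pi1 - t / pi1) = pi0 / pi1 - t * (1 / pi1 + 1 / gamma)"
  shows "pi0 * (pi0 / pi1 - t / pi1) - pi1 / 2 * (pi0 / pi1 - t / pi1) ^ 2
     - gamma / 2 * ((pi0 / pi1 - t / pi1) - exp (- a) * (pi0 / pi1 - t / pi1)) ^ 2
     - t * (exp (- a) * (pi0 / pi1 - t / pi1))
     = pi0 ^ 2 / (2 * pi1) - t * (pi0 / pi1 - t / 2 * (1 / pi1 + 1 / gamma))"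
  unfolding assms(3) by (rule opt_value0[OF assms(1,2)]) auto

lemma setup_a:
  fixes pi0 pi1 gamma t :: real
  assumes "pi1 > 0" "gamma > 0" "t > 0" "t * (1 / pi1 + 1 / gamma) < pi0 / pi1"
  obtains a where "exp (- a) = (pi0 / pi1 - t * (1 / pi1 + 1 / gamma)) / (pi0 / pi1 - t / pi1)"
    "exp (- a) * (pi0 / pi1 - t / pi1) = pi0 / pi1 - t * (1 / pi1 + 1 / gamma)"
    "a \<ge> 0" "pi0 / pi1 - t / pi1 > 0" "t < pi0"
proof -
  let ?E = "pi0 / pi1 - t * (1 / pi1 + 1 / gamma)" and ?q = "pi0 / pi1 - t / pi1"
  have tg: "t / gamma > 0" using assms by simp
  have Epos: "?E > 0" using assms by simp
  have qE: "?q = ?E + t / gamma" by (simp add: algebra_simps)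
  have qpos: "?q > 0" using Epos tg qE by linarith
  have r0: "?E / ?q > 0" using Epos qpos by simp
  have r1: "?E / ?q \<le> 1" using Epos qpos qE tg by simp
  define a where "a = - ln (?E / ?q)"
  have ea: "exp (- a) = ?E / ?q" unfolding a_def using r0 by simp
  have "a \<ge> 0" unfolding a_def using r0 r1 by simp
  moreover have "exp (- a) * ?q = ?E"
  proof -
    define E q where "E = ?E" and "q = ?q"
    have "q > 0" using qpos q_def by simp
    then have "E / q * q = E" by simp
    then show ?thesis using ea E_def q_def by simp
  qed
  moreover have "t < pi0" using qpos assms by (simp add: field_simps)
  ultimately show ?thesis using that ea qpos by blast
qed

theorem proposition2p3:
  fixes pi0 pi1 gamma tau lam P :: real
  assumes pos: "pi0 > 0" "pi1 > 0" "gamma > 0" "tau > 0" "lam > 0"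
    and Ebau_def: "Ebau = pi0 / pi1"
    and qbau_def: "qbau = pi0 / pi1"
    and Wbau_def: "Wbau = pi0 ^ 2 / (2 * pi1)"
    and rho_def: "rho = 1 / pi1 + 1 / gamma"
    and tau_small: "tau * rho < Ebau"
    and lam_small: "lam * rho < Ebau"
    and P_bounds: "0 < P" "P < lam"
  shows
    "(\<exists>a. exp (- a) = (Ebau - tau * rho) / (qbau - tau / pi1)
          \<and> is_arg_max (wealth_tax pi0 pi1 gamma tau) (feasible_tax pi0 pi1 gamma tau)
               (qbau - tau / pi1, a)
          \<and> exp (- a) * (qbau - tau / pi1) = Ebau - tau * rho
          \<and> wealth_tax pi0 pi1 gamma tau (qbau - tau / pi1, a)
              = Wbau - tau * (Ebau - tau / 2 * rho))
     \<and> (\<exists>a. exp (- a) = (Ebau - P * rho) / (qbau - P / pi1)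
          \<and> is_arg_max (wealth_mar pi0 pi1 gamma P lam) (feasible_mar pi0 pi1 gamma P lam)
               (qbau - P / pi1, a, Ebau - P * rho)
          \<and> exp (- a) * (qbau - P / pi1) = Ebau - P * rho
          \<and> wealth_mar pi0 pi1 gamma P lam (qbau - P / pi1, a, Ebau - P * rho)
              = Wbau - P * (Ebau - P / 2 * rho))"
proof
  have rp: "rho > 0" using pos rho_def by (simp add: add_pos_pos)
  have Wpos: "\<And>t. t < pi0 \<Longrightarrow> pi0 ^ 2 / (2 * pi1) - t * (pi0 / pi1 - t / 2 * (1 / pi1 + 1 / gamma)) > 0"
  proof -
    fix t :: real assume "t < pi0"
    have "pi0 ^ 2 / (2 * pi1) - t * (pi0 / pi1 - t / 2 * (1 / pi1 + 1 / gamma))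
        = (pi0 - t) ^ 2 / (2 * pi1) + t ^ 2 / (2 * gamma)"
      using pos by (simp add: field_simps power2_eq_square)
    moreover have "(pi0 - t) ^ 2 / (2 * pi1) > 0" using \<open>t < pi0\<close> pos by simp
    moreover have "t ^ 2 / (2 * gamma) \<ge> 0" using pos by simp
    ultimately show "pi0 ^ 2 / (2 * pi1) - t * (pi0 / pi1 - t / 2 * (1 / pi1 + 1 / gamma)) > 0"
      by linarith
  qed
  show "\<exists>a. exp (- a) = (Ebau - tau * rho) / (qbau - tau / pi1)
          \<and> is_arg_max (wealth_tax pi0 pi1 gamma tau) (feasible_tax pi0 pi1 gamma tau)
               (qbau - tau / pi1, a)
          \<and> exp (- a) * (qbau - tau / pi1) = Ebau - tau * rho
          \<and> wealth_tax pi0 pi1 gamma tau (qbau - tau / pi1, a)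
              = Wbau - tau * (Ebau - tau / 2 * rho)"
  proof -
    obtain a where a1: "exp (- a) = (pi0 / pi1 - tau * (1 / pi1 + 1 / gamma)) / (pi0 / pi1 - tau / pi1)"
      and a2: "exp (- a) * (pi0 / pi1 - tau / pi1) = pi0 / pi1 - tau * (1 / pi1 + 1 / gamma)"
      and a3: "a \<ge> 0" and a4: "pi0 / pi1 - tau / pi1 > 0" and a5: "tau < pi0"
      using setup_a[of pi1 gamma tau pi0] pos tau_small unfolding rho_def Ebau_def by blast
    have val: "wealth_tax pi0 pi1 gamma tau (qbau - tau / pi1, a) = Wbau - tau * (Ebau - tau / 2 * rho)"
      unfolding wt_eq qbau_def Wbau_def Ebau_def rho_def using opt_value[OF pos(2,3) a2] by simp
    have "is_arg_max (wealth_tax pi0 pi1 gamma tau) (feasible_tax pi0 pi1 gamma tau) (qbau - tau / pi1, a)"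
      unfolding is_arg_max_def
    proof (intro conjI notI)
      show "feasible_tax pi0 pi1 gamma tau (qbau - tau / pi1, a)"
        unfolding feasible_tax_def using val a3 a4 Wpos[OF a5]
        by (simp add: qbau_def Wbau_def Ebau_def rho_def)
    next
      assume "\<exists>y. feasible_tax pi0 pi1 gamma tau y \<and>
               wealth_tax pi0 pi1 gamma tau (qbau - tau / pi1, a) < wealth_tax pi0 pi1 gamma tau y"
      then obtain q b where "wealth_tax pi0 pi1 gamma tau (qbau - tau / pi1, a) < wealth_tax pi0 pi1 gamma tau (q, b)"
        by auto
      moreover have "wealth_tax pi0 pi1 gamma tau (q, b) \<le> Wbau - tau * (Ebau - tau / 2 * rho)"
        unfolding wt_eq Wbau_def Ebau_def rho_def by (rule core_ineq[OF pos(2,3)])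
      ultimately show False using val by linarith
    qed
    then show ?thesis using a1 a2 val unfolding qbau_def Ebau_def rho_def by blast
  qed
  show "\<exists>a. exp (- a) = (Ebau - P * rho) / (qbau - P / pi1)
          \<and> is_arg_max (wealth_mar pi0 pi1 gamma P lam) (feasible_mar pi0 pi1 gamma P lam)
               (qbau - P / pi1, a, Ebau - P * rho)
          \<and> exp (- a) * (qbau - P / pi1) = Ebau - P * rho
          \<and> wealth_mar pi0 pi1 gamma P lam (qbau - P / pi1, a, Ebau - P * rho)
              = Wbau - P * (Ebau - P / 2 * rho)"
  proof -
    have Psmall: "P * rho < Ebau" using lam_small P_bounds rp
      by (meson less_trans mult_strict_right_mono)
    obtain a where a1: "exp (- a) = (pi0 / pi1 - P * (1 / pi1 + 1 / gamma)) / (pi0 / pi1 - P / pi1)"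
      and a2: "exp (- a) * (pi0 / pi1 - P / pi1) = pi0 / pi1 - P * (1 / pi1 + 1 / gamma)"
      and a3: "a \<ge> 0" and a4: "pi0 / pi1 - P / pi1 > 0" and a5: "P < pi0"
      using setup_a[of pi1 gamma P pi0] pos P_bounds Psmall unfolding rho_def Ebau_def by blast
    have dpos: "Ebau - P * rho > 0" using Psmall by simp
    have val: "wealth_mar pi0 pi1 gamma P lam (qbau - P / pi1, a, Ebau - P * rho) = Wbau - P * (Ebau - P / 2 * rho)"
    proof -
      have m: "max 0 (exp (- a) * (pi0 / pi1 - P / pi1) - (pi0 / pi1 - P * (1 / pi1 + 1 / gamma))) = 0"
        using a2 by simp
      show ?thesis
        unfolding wm_eq qbau_def Wbau_def Ebau_def rho_def m
        using opt_value[OF pos(2,3) a2] a2 by (simp add: mult.commute)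
    qed
    have "is_arg_max (wealth_mar pi0 pi1 gamma P lam) (feasible_mar pi0 pi1 gamma P lam) (qbau - P / pi1, a, Ebau - P * rho)"
      unfolding is_arg_max_def
    proof (intro conjI notI)
      show "feasible_mar pi0 pi1 gamma P lam (qbau - P / pi1, a, Ebau - P * rho)"
        unfolding feasible_mar_def using val a3 a4 dpos Wpos[OF a5]
        by (simp add: qbau_def Wbau_def Ebau_def rho_def)
    next
      assume "\<exists>y. feasible_mar pi0 pi1 gamma P lam y \<and>
               wealth_mar pi0 pi1 gamma P lam (qbau - P / pi1, a, Ebau - P * rho) < wealth_mar pi0 pi1 gamma P lam y"
      then obtain q b d where fe: "feasible_mar pi0 pi1 gamma P lam (q, b, d)"
        and lt: "wealth_mar pi0 pi1 gamma P lam (qbau - P / pi1, a, Ebau - P * rho) < wealth_mar pi0 pi1 gamma P lam (q, b, d)"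
        by auto
      have d0: "d \<ge> 0" using fe unfolding feasible_mar_def by simp
      have pen: "d * P + lam * max 0 (exp (- b) * q - d) \<ge> P * (exp (- b) * q)"
      proof (cases "exp (- b) * q \<le> d")
        case True then show ?thesis using P_bounds
          by (simp add: mult.commute mult_left_mono)
      next
        case False
        then have "lam * (exp (- b) * q - d) \<ge> P * (exp (- b) * q - d)"
          using P_bounds by (intro mult_right_mono) auto
        then show ?thesis using False by (simp add: algebra_simps)
      qed
      have "pi0 * q - pi1 / 2 * q ^ 2 - gamma / 2 * (q - exp (- b) * q) ^ 2 - P * (exp (- b) * q)
          \<le> Wbau - P * (Ebau - P / 2 * rho)"
        unfolding Wbau_def Ebau_def rho_def by (rule core_ineq[OF pos(2,3)])
      then have "wealth_mar pi0 pi1 gamma P lam (q, b, d) \<le> Wbau - P * (Ebau - P / 2 * rho)"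
        unfolding wm_eq using pen by linarith
      then show False using val lt by linarith
    qed
    then show ?thesis using a1 a2 val unfolding qbau_def Ebau_def rho_def by blast
  qed
qed

end
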